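(* Let $n\ge d\ge 1$ and let $(A,C)$ be a strict nondegenerate HOON pair, with $A$ real $n\times n$ and $C$ real $d\times n$. If $(\tilde A,\tilde C)$ is a strict HOON pair that is equivalent to $(A,C)$, then $\tilde A=A$ and $\tilde C=C$.
   Context: $(A,C)$ is a HOON pair if $A$ is upper Hessenberg ($A_{i,j}=0$ for $i>j+1$), $C_{1,j}=0$ for $j>1$, and $A^{*}A=\mathbb{I}_n-C^{*}C$ (${}^*$ = transpose). It is nondegenerate if $|C_{1,1}|<1$, unreduced if $A_{i+1,i}\neq 0$ for $1\le i<n$ and $C_{1,1}\ne 0$, standard if $A_{i+1,i}\ge 0$ for $1\le i<n$ and $0\le C_{1,1}<1$, and strict if it is unreduced and standard. Two pairs are equivalent if $\tilde A=T^{-1}AT$ and $\tilde C=CT$ for some invertible real matrix $T$. *)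

theory Defs
  imports "Jordan_Normal_Form.Matrix"
begin

(* Matrices are Jordan_Normal_Form matrices over the reals; indices are 0-based,
   so the paper's entry (i,j) is  M $$ (i-1, j-1). *)

definition hoon_pair :: "nat \<Rightarrow> nat \<Rightarrow> real mat \<Rightarrow> real mat \<Rightarrow> bool" where
  "hoon_pair n d A C \<longleftrightarrow>
     A \<in> carrier_mat n n \<and> C \<in> carrier_mat d n \<and>
     (\<forall>i<n. \<forall>j<n. i > j + 1 \<longrightarrow> A $$ (i, j) = 0) \<and>
     (\<forall>j<n. j > 0 \<longrightarrow> C $$ (0, j) = 0) \<and>
     transpose_mat A * A = 1\<^sub>m n - transpose_mat C * C"

definition hoon_nondegenerate :: "real mat \<Rightarrow> real mat \<Rightarrow> bool" where
  "hoon_nondegenerate A C \<longleftrightarrow> \<bar>C $$ (0, 0)\<bar> < 1"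

definition hoon_unreduced :: "nat \<Rightarrow> real mat \<Rightarrow> real mat \<Rightarrow> bool" where
  "hoon_unreduced n A C \<longleftrightarrow> (\<forall>i. i + 1 < n \<longrightarrow> A $$ (i + 1, i) \<noteq> 0) \<and> C $$ (0, 0) \<noteq> 0"

definition hoon_standard :: "nat \<Rightarrow> real mat \<Rightarrow> real mat \<Rightarrow> bool" where
  "hoon_standard n A C \<longleftrightarrow> (\<forall>i. i + 1 < n \<longrightarrow> A $$ (i + 1, i) \<ge> 0) \<and>
                               0 \<le> C $$ (0, 0) \<and> C $$ (0, 0) < 1"

definition hoon_strict :: "nat \<Rightarrow> real mat \<Rightarrow> real mat \<Rightarrow> bool" where
  "hoon_strict n A C \<longleftrightarrow> hoon_unreduced n A C \<and> hoon_standard n A C"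

definition hoon_equivalent :: "nat \<Rightarrow> real mat \<Rightarrow> real mat \<Rightarrow> real mat \<Rightarrow> real mat \<Rightarrow> bool" where
  "hoon_equivalent n A C A' C' \<longleftrightarrow>
     (\<exists>T Ti. T \<in> carrier_mat n n \<and> Ti \<in> carrier_mat n n \<and>
            T * Ti = 1\<^sub>m n \<and> Ti * T = 1\<^sub>m n \<and>
            A' = Ti * A * T \<and> C' = C * T)"

end

theory Submission
  imports Defs "Jordan_Normal_Form.Determinant"
begin


definition sq :: "real vec \<Rightarrow> real" where "sq v = v \<bullet> v"

lemma sq_sum: "v \<in> carrier_vec n \<Longrightarrow> sq v = (\<Sum>i<n. (v$i)^2)"
  by (auto simp add: sq_def scalar_prod_def power2_eq_square lessThan_atLeast0)

lemma sq_nonneg: "sq v \<ge> 0"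
  unfolding sq_def scalar_prod_def by (intro sum_nonneg) auto

lemma sq_zero: assumes v: "v \<in> carrier_vec n" and z: "sq v = 0" shows "v = 0\<^sub>v n"
proof (intro eq_vecI)
  fix i assume i: "i < dim_vec (0\<^sub>v n :: real vec)"
  have "(\<Sum>i<n. (v$i)^2) = 0" using z sq_sum[OF v] by simp
  hence "\<forall>i\<in>{..<n}. (v$i)^2 = 0" by (subst (asm) sum_nonneg_eq_0_iff) auto
  with i show "v $ i = 0\<^sub>v n $ i" by auto
qed (use v in auto)

lemma sq_lin: assumes a: "a \<in> carrier_vec n" and b: "b \<in> carrier_vec n"
  shows "sq (s \<cdot>\<^sub>v a - b) = s^2 * sq a - 2*s*(a \<bullet> b) + sq b"
proof -
  have "sq (s \<cdot>\<^sub>v a - b) = (\<Sum>i<n. (s * a$i - b$i)^2)"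
    using a b by (subst sq_sum[of _ n]) auto
  also have "\<dots> = (\<Sum>i<n. s^2 * (a$i)^2 - 2*s*(a$i * b$i) + (b$i)^2)"
    by (intro sum.cong) (auto simp: power2_eq_square algebra_simps)
  also have "\<dots> = s^2 * sq a - 2*s*(a \<bullet> b) + sq b"
    using a b by (simp add: sum.distrib sum_subtractf sum_distrib_left sq_sum[of _ n]
        scalar_prod_def lessThan_atLeast0)
  finally show ?thesis .
qed

lemma my_CS:
  fixes a b :: "nat \<Rightarrow> real"
  shows "(\<Sum>i\<in>I. a i * b i)\<^sup>2 \<le> (\<Sum>i\<in>I. (a i)\<^sup>2) * (\<Sum>i\<in>I. (b i)\<^sup>2)"
proof (cases "finite I")
  case False thus ?thesis by simp
next
  case fin: True
  show ?thesis
  proof (cases "(\<Sum>i\<in>I. (b i)\<^sup>2) > 0")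
    case False
    hence "\<forall>i\<in>I. (b i)^2 = 0"
    proof -
      have "(\<Sum>i\<in>I. (b i)\<^sup>2) \<ge> 0" by (intro sum_nonneg) auto
      with False have "(\<Sum>i\<in>I. (b i)\<^sup>2) = 0" by linarith
      thus ?thesis using fin by (subst (asm) sum_nonneg_eq_0_iff) auto
    qed
    thus ?thesis by simp
  next
    case True
    define S where "S = (\<Sum>i\<in>I. (b i)\<^sup>2)"
    define P where "P = (\<Sum>i\<in>I. a i * b i)"
    define r where "r = P / S"
    have "0 \<le> (\<Sum>i\<in>I. (a i - r * b i)\<^sup>2)" by (intro sum_nonneg) auto
    also have "\<dots> = (\<Sum>i\<in>I. (a i)^2) - 2*r*P + r^2 * S"
      unfolding P_def S_def
      by (simp add: power2_eq_square algebra_simps sum.distrib sum_subtractf sum_distrib_left)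
    also have "\<dots> = (\<Sum>i\<in>I. (a i)^2) - P^2/S"
      using True unfolding r_def S_def[symmetric] by (simp add: field_simps power2_eq_square)
    finally have "P^2 / S \<le> (\<Sum>i\<in>I. (a i)^2)" by simp
    thus ?thesis using True unfolding P_def[symmetric] S_def[symmetric]
      by (simp add: divide_le_eq mult.commute)
  qed
qed

definition frob :: "nat \<Rightarrow> nat \<Rightarrow> real mat \<Rightarrow> real" where
  "frob m k L = (\<Sum>i<m. \<Sum>j<k. (L$$(i,j))^2)"

lemma frob_bound: assumes L: "L \<in> carrier_mat m k" and v: "v \<in> carrier_vec k"
  shows "sq (L *\<^sub>v v) \<le> frob m k L * sq v"
proof -
  have "sq (L *\<^sub>v v) = (\<Sum>i<m. ((L *\<^sub>v v)$i)^2)" using L v by (intro sq_sum) auto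
  also have "\<dots> = (\<Sum>i<m. (\<Sum>j<k. L$$(i,j) * v$j)^2)"
    using L v by (intro sum.cong) (auto simp: scalar_prod_def lessThan_atLeast0)
  also have "\<dots> \<le> (\<Sum>i<m. (\<Sum>j<k. (L$$(i,j))^2) * (\<Sum>j<k. (v$j)^2))"
    by (intro sum_mono my_CS)
  also have "\<dots> = frob m k L * sq v"
    unfolding frob_def sq_sum[OF v] by (simp add: sum_distrib_right)
  finally show ?thesis .
qed

lemma frob_nonneg: "frob m k L \<ge> 0"
  unfolding frob_def by (intro sum_nonneg) auto

lemma transpose_dot: fixes A :: "real mat" assumes A: "A \<in> carrier_mat nr nc" and x: "x \<in> carrier_vec nc" and y: "y \<in> carrier_vec nr"
  shows "x \<bullet> (transpose_mat A *\<^sub>v y) = (A *\<^sub>v x) \<bullet> y"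
  using transpose_vec_mult_scalar[OF A x y] comm_scalar_prod[of x nc "transpose_mat A *\<^sub>v y"]
    comm_scalar_prod[of y nr "A *\<^sub>v x"] A x y by auto

lemma pow_zero_arg: assumes c: "c \<ge> 0" and q: "0 \<le> q" "q < 1"
  and h: "\<And>k. \<bar>a\<bar> \<le> c * q^k" shows "a = (0::real)"
proof (rule ccontr)
  assume a: "a \<noteq> 0"
  hence "0 < \<bar>a\<bar> / (c+1)" using c by auto
  from real_arch_pow_inv[OF this q(2)] obtain k where k: "q^k < \<bar>a\<bar> / (c+1)" by auto
  hence "(c+1) * q^k < \<bar>a\<bar>" using c by (simp add: field_simps)
  moreover have "c * q^k \<le> (c+1) * q^k" using q by (simp add: mult_right_mono)
  ultimately show False using h[of k] by linarith
qed

locale hp =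
  fixes n d :: nat and B D :: "real mat"
  assumes B: "B \<in> carrier_mat n n" and D: "D \<in> carrier_mat d n" and d1: "1 \<le> d"
    and hess: "\<And>i j. i < n \<Longrightarrow> j < n \<Longrightarrow> i > j + 1 \<Longrightarrow> B $$ (i,j) = 0"
    and Drow: "\<And>j. j < n \<Longrightarrow> j > 0 \<Longrightarrow> D $$ (0,j) = 0"
    and orth: "transpose_mat B * B = 1\<^sub>m n - transpose_mat D * D"
    and sub: "\<And>i. i + 1 < n \<Longrightarrow> B $$ (i+1,i) \<noteq> 0"
    and D00: "D $$ (0,0) \<noteq> 0" and n_pos: "0 < n"
begin

lemma BTB: assumes v: "v \<in> carrier_vec n"
  shows "transpose_mat B *\<^sub>v (B *\<^sub>v v) = v - transpose_mat D *\<^sub>v (D *\<^sub>v v)"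
proof -
  have "transpose_mat B *\<^sub>v (B *\<^sub>v v) = (transpose_mat B * B) *\<^sub>v v"
    by (subst assoc_mult_mat_vec) (use B v in auto)
  also have "\<dots> = (1\<^sub>m n - transpose_mat D * D) *\<^sub>v v" using orth by simp
  also have "\<dots> = 1\<^sub>m n *\<^sub>v v - (transpose_mat D * D) *\<^sub>v v"
    by (rule minus_mult_distrib_mat_vec) (use D v in auto)
  also have "\<dots> = v - transpose_mat D *\<^sub>v (D *\<^sub>v v)" using D v by auto
  finally show ?thesis .
qed

lemma iso: assumes v: "v \<in> carrier_vec n"
  shows "sq (B *\<^sub>v v) = sq v - sq (D *\<^sub>v v)"
proof -
  have "sq (B *\<^sub>v v) = v \<bullet> (transpose_mat B *\<^sub>v (B *\<^sub>v v))"
    unfolding sq_def by (rule transpose_dot[symmetric]) (use B v in auto)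
  also have "\<dots> = v \<bullet> (v - transpose_mat D *\<^sub>v (D *\<^sub>v v))" by (simp add: BTB[OF v])
  also have "\<dots> = v \<bullet> v - v \<bullet> (transpose_mat D *\<^sub>v (D *\<^sub>v v))"
    by (rule scalar_prod_minus_distrib) (use D v in auto)
  also have "v \<bullet> (transpose_mat D *\<^sub>v (D *\<^sub>v v)) = sq (D *\<^sub>v v)"
    unfolding sq_def by (rule transpose_dot) (use D v in auto)
  finally show ?thesis unfolding sq_def by simp
qed

lemma contr: "v \<in> carrier_vec n \<Longrightarrow> sq (B *\<^sub>v v) \<le> sq v"
  using iso[of v] sq_nonneg[of "D *\<^sub>v v"] by simp

lemma BTfix: assumes v: "v \<in> carrier_vec n" and z: "D *\<^sub>v v = 0\<^sub>v d"
  shows "transpose_mat B *\<^sub>v (B *\<^sub>v v) = v"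
  using BTB[OF v] z D v by auto

definition it :: "nat \<Rightarrow> real vec \<Rightarrow> real vec" where
  "it k v = ((\<lambda>x. B *\<^sub>v x) ^^ k) v"

lemma it_carrier: "v \<in> carrier_vec n \<Longrightarrow> it k v \<in> carrier_vec n"
  unfolding it_def by (induct k) (use B in auto)

lemma it_0[simp]: "it 0 v = v" and it_Suc: "it (Suc k) v = B *\<^sub>v it k v"
  unfolding it_def by auto

lemma Drow0: assumes w: "w \<in> carrier_vec n" and n: "n > 0"
  shows "(D *\<^sub>v w) $ 0 = D $$ (0,0) * w $ 0"
proof -
  have "(D *\<^sub>v w) $ 0 = (\<Sum>j\<in>{0..<n}. D $$ (0,j) * w $ j)"
    using D w d1 by (auto simp: scalar_prod_def)
  also have "{0..<n} = insert 0 {1..<n}" using n by auto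
  also have "(\<Sum>j\<in>insert 0 {1..<n}. D $$ (0,j) * w $ j) = D $$ (0,0) * w $ 0 + (\<Sum>j\<in>{1..<n}. D $$ (0,j) * w $ j)"
    by (subst sum.insert) auto
  also have "(\<Sum>j\<in>{1..<n}. D $$ (0,j) * w $ j) = 0" by (intro sum.neutral) (auto simp: Drow)
  finally show ?thesis by simp
qed

lemma BT_entry: assumes u: "u \<in> carrier_vec n" and i: "i + 1 < n" and z: "\<And>j. j \<le> i \<Longrightarrow> u $ j = 0"
  shows "(transpose_mat B *\<^sub>v u) $ i = B $$ (i+1,i) * u $ (i+1)"
proof -
  have "(transpose_mat B *\<^sub>v u) $ i = (\<Sum>l\<in>{0..<n}. B $$ (l,i) * u $ l)"
    using B u i by (auto simp: scalar_prod_def)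
  also have "\<dots> = B $$ (i+1,i) * u $ (i+1) + (\<Sum>l\<in>{0..<n} - {i+1}. B $$ (l,i) * u $ l)"
    using i by (subst sum.remove[of _ "i+1"]) auto
  also have "(\<Sum>l\<in>{0..<n} - {i+1}. B $$ (l,i) * u $ l) = 0"
  proof (intro sum.neutral ballI)
    fix l assume l: "l \<in> {0..<n} - {i+1}"
    show "B $$ (l,i) * u $ l = 0"
    proof (cases "l \<le> i")
      case True thus ?thesis using z by simp
    next
      case False thus ?thesis using l i hess[of l i] by auto
    qed
  qed
  finally show ?thesis by simp
qed

lemma key: assumes v: "v \<in> carrier_vec n" and z: "\<And>k. k < n \<Longrightarrow> D *\<^sub>v it k v = 0\<^sub>v d"
  shows "v = 0\<^sub>v n"
proof -
  have n: "n > 0" by (rule n_pos)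
  have w0: "(it k v) $ 0 = 0" if k: "k < n" for k
  proof -
    have "(D *\<^sub>v it k v) $ 0 = 0" using z[OF k] d1 by auto
    with Drow0[OF it_carrier[OF v] n] D00 show ?thesis by simp
  qed
  have Q: "\<forall>k. i \<le> k \<longrightarrow> k < n \<longrightarrow> (\<forall>j\<le>i. (it k v) $ j = 0)" if "i < n" for i
    using that
  proof (induct i)
    case 0 thus ?case using w0 by auto
  next
    case (Suc i)
    show ?case
    proof (intro allI impI)
      fix k j assume k: "Suc i \<le> k" "k < n" and j: "j \<le> Suc i"
      from Suc have IH: "\<And>k j. i \<le> k \<Longrightarrow> k < n \<Longrightarrow> j \<le> i \<Longrightarrow> (it k v) $ j = 0" by auto
      show "(it k v) $ j = 0"
      proof (cases "j \<le> i")
        case True thus ?thesis using IH k by auto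
      next
        case False
        hence j: "j = i + 1" using j by auto
        obtain k' where k': "k = Suc k'" using k by (cases k) auto
        have ck: "it k' v \<in> carrier_vec n" by (rule it_carrier[OF v])
        have "transpose_mat B *\<^sub>v it k v = it k' v"
          unfolding k' it_Suc by (rule BTfix[OF ck z]) (use k k' in auto)
        hence "(it k' v) $ i = B $$ (i+1,i) * (it k v) $ (i+1)"
          using BT_entry[OF it_carrier[OF v], of i k] IH[of k] k Suc by auto
        moreover have "(it k' v) $ i = 0" using IH[of k' i] k k' by auto
        ultimately show ?thesis using sub[of i] Suc j by auto
      qed
    qed
  qed
  have last: "it (n-1) v = 0\<^sub>v n"
  proof (intro eq_vecI)
    fix j assume "j < dim_vec (0\<^sub>v n :: real vec)"
    thus "it (n-1) v $ j = 0\<^sub>v n $ j" using Q[of "n-1"] n by auto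
  qed (use it_carrier[OF v] in auto)
  have down: "it (n - 1 - m) v = 0\<^sub>v n" if "m \<le> n - 1" for m
    using that
  proof (induct m)
    case 0 thus ?case using last by simp
  next
    case (Suc m)
    define k where "k = n - 1 - Suc m"
    have kk: "n - 1 - m = Suc k" using Suc(2) unfolding k_def by auto
    have "it k v = transpose_mat B *\<^sub>v (B *\<^sub>v it k v)"
      by (rule BTfix[symmetric, OF it_carrier[OF v] z]) (use Suc(2) k_def in auto)
    also have "B *\<^sub>v it k v = 0\<^sub>v n" using Suc kk by (simp add: it_Suc)
    finally show ?case unfolding k_def[symmetric] using B by auto
  qed
  show ?thesis using down[of "n-1"] by simp
qed

lemma tele: assumes v: "v \<in> carrier_vec n"
  shows "sq (it k v) + (\<Sum>j<k. sq (D *\<^sub>v it j v)) = sq v"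
proof (induct k)
  case (Suc k)
  have "sq (it (Suc k) v) = sq (it k v) - sq (D *\<^sub>v it k v)"
    unfolding it_Suc by (rule iso[OF it_carrier[OF v]])
  thus ?case using Suc by simp
qed simp

lemma it_contr: "v \<in> carrier_vec n \<Longrightarrow> sq (it k v) \<le> sq v"
  using tele[of v k] sum_nonneg[of "{..<k}" "\<lambda>j. sq (D *\<^sub>v it j v)"] sq_nonneg by auto

lemma pow_it: "v \<in> carrier_vec n \<Longrightarrow> (B ^\<^sub>m k) *\<^sub>v v = it k v"
proof (induct k arbitrary: v)
  case 0 thus ?case using B by simp
next
  case (Suc k)
  have "(B ^\<^sub>m Suc k) *\<^sub>v v = (B ^\<^sub>m k) *\<^sub>v (B *\<^sub>v v)"
    unfolding pow_mat.simps by (rule assoc_mult_mat_vec) (use B Suc in auto)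
  also have "\<dots> = it k (B *\<^sub>v v)" using Suc B by simp
  also have "\<dots> = it (Suc k) v" unfolding it_def by (simp add: funpow_Suc_right del: funpow.simps)
  finally show ?case .
qed

definition R where "R = B ^\<^sub>m n"
definition M where "M = 1\<^sub>m n - transpose_mat R * R"

lemma R: "R \<in> carrier_mat n n" unfolding R_def using B by simp
lemma M: "M \<in> carrier_mat n n" unfolding M_def using R by auto

lemma R_contr: "v \<in> carrier_vec n \<Longrightarrow> sq (R *\<^sub>v v) \<le> sq v"
  unfolding R_def by (simp add: pow_it it_contr)

lemma gM: assumes x: "x \<in> carrier_vec n" and y: "y \<in> carrier_vec n"
  shows "x \<bullet> (M *\<^sub>v y) = x \<bullet> y - (R *\<^sub>v x) \<bullet> (R *\<^sub>v y)"
proof -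
  have "M *\<^sub>v y = 1\<^sub>m n *\<^sub>v y - (transpose_mat R * R) *\<^sub>v y"
    unfolding M_def by (rule minus_mult_distrib_mat_vec) (use R y in auto)
  also have "\<dots> = y - transpose_mat R *\<^sub>v (R *\<^sub>v y)" using R y by auto
  finally have "x \<bullet> (M *\<^sub>v y) = x \<bullet> y - x \<bullet> (transpose_mat R *\<^sub>v (R *\<^sub>v y))"
    using scalar_prod_minus_distrib[of x n y "transpose_mat R *\<^sub>v (R *\<^sub>v y)"] x y R by auto
  also have "x \<bullet> (transpose_mat R *\<^sub>v (R *\<^sub>v y)) = (R *\<^sub>v x) \<bullet> (R *\<^sub>v y)"
    by (rule transpose_dot) (use R x y in auto)
  finally show ?thesis .
qed

lemma M_inj: assumes v: "v \<in> carrier_vec n" and Mv: "M *\<^sub>v v = 0\<^sub>v n" shows "v = 0\<^sub>v n"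
proof -
  have "v \<bullet> (M *\<^sub>v v) = 0" using Mv v by simp
  hence e: "sq v = sq (it n v)" using gM[OF v v] unfolding sq_def R_def by (simp add: pow_it v)
  hence "(\<Sum>j<n. sq (D *\<^sub>v it j v)) = 0" using tele[OF v, of n] by simp
  hence "\<forall>j\<in>{..<n}. sq (D *\<^sub>v it j v) = 0"
    by (subst (asm) sum_nonneg_eq_0_iff) (auto simp: sq_nonneg)
  hence "\<And>k. k < n \<Longrightarrow> D *\<^sub>v it k v = 0\<^sub>v d"
    using sq_zero[of _ d] D it_carrier[OF v] by (metis lessThan_iff mult_mat_vec_carrier)
  thus ?thesis by (rule key[OF v])
qed

lemma M_leftinv: "\<exists>N. N \<in> carrier_mat n n \<and> N * M = 1\<^sub>m n"
proof -
  have "det M \<noteq> 0"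
    using det_0_iff_vec_prod_zero_field[OF M] M_inj by auto
  from det_non_zero_imp_unit[OF M this, of "()"]
  show ?thesis unfolding Units_def ring_mat_def by auto
qed

lemma contraction: "\<exists>q. 0 \<le> q \<and> q < 1 \<and> (\<forall>v\<in>carrier_vec n. sq (R *\<^sub>v v) \<le> q * sq v)"
proof -
  obtain N where N: "N \<in> carrier_mat n n" and NM: "N * M = 1\<^sub>m n" using M_leftinv by auto
  define K where "K = frob n n (transpose_mat N)"
  have K0: "K \<ge> 0" unfolding K_def by (rule frob_nonneg)
  define s where "s = 1 / (K + 1)"
  have s0: "0 < s" "s \<le> 1" using K0 unfolding s_def by auto
  have s1: "s * (K + 1) = 1" using K0 unfolding s_def by simp
  have sK: "s * s * K = s - s * s"
  proof -
    have "s * s * K = s * (s * (K + 1)) - s * s" by (simp add: algebra_simps)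
    thus ?thesis using s1 by simp
  qed
  have "sq (R *\<^sub>v v) \<le> (1 - s) * sq v" if v: "v \<in> carrier_vec n" for v
  proof -
    define u where "u = transpose_mat N *\<^sub>v v"
    have u: "u \<in> carrier_vec n" unfolding u_def using N v by auto
    have uK: "sq u \<le> K * sq v" unfolding u_def K_def by (rule frob_bound) (use N v in auto)
    have "sq v = v \<bullet> ((N * M) *\<^sub>v v)" using NM v unfolding sq_def by simp
    also have "\<dots> = v \<bullet> (transpose_mat (transpose_mat N) *\<^sub>v (M *\<^sub>v v))"
      using N M v by simp
    also have "\<dots> = u \<bullet> (M *\<^sub>v v)"
      unfolding u_def by (rule transpose_dot) (use N M v in auto)
    also have "\<dots> = u \<bullet> v - (R *\<^sub>v u) \<bullet> (R *\<^sub>v v)" by (rule gM[OF u v])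
    finally have g: "sq v = u \<bullet> v - (R *\<^sub>v u) \<bullet> (R *\<^sub>v v)" .
    have w: "s \<cdot>\<^sub>v u - v \<in> carrier_vec n" using u v by auto
    have Rw: "R *\<^sub>v (s \<cdot>\<^sub>v u - v) = s \<cdot>\<^sub>v (R *\<^sub>v u) - R *\<^sub>v v"
      using R u v by (simp add: mult_minus_distrib_mat_vec mult_mat_vec)
    have "0 \<le> sq (s \<cdot>\<^sub>v u - v) - sq (R *\<^sub>v (s \<cdot>\<^sub>v u - v))" using R_contr[OF w] by simp
    also have "\<dots> = s^2 * (sq u - sq (R *\<^sub>v u)) - 2 * s * (u \<bullet> v - (R *\<^sub>v u) \<bullet> (R *\<^sub>v v))
         + (sq v - sq (R *\<^sub>v v))"
      unfolding Rw using sq_lin[OF u v, of s] sq_lin[of "R *\<^sub>v u" n "R *\<^sub>v v" s] R u v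
      by (simp add: algebra_simps)
    finally have "0 \<le> s^2 * (sq u - sq (R *\<^sub>v u)) - 2 * s * sq v + (sq v - sq (R *\<^sub>v v))"
      unfolding g .
    moreover have "s^2 * (sq u - sq (R *\<^sub>v u)) \<le> s^2 * (K * sq v)"
      using uK sq_nonneg[of "R *\<^sub>v u"] by (intro mult_left_mono) auto
    moreover have "s^2 * (K * sq v) = (s - s*s) * sq v"
    proof -
      have "s^2 * (K * sq v) = (s * s * K) * sq v" by (simp add: power2_eq_square algebra_simps)
      thus ?thesis using sK by simp
    qed
    moreover have "0 \<le> s * s * sq v" using sq_nonneg[of v] by simp
    ultimately show ?thesis by (simp add: algebra_simps)
  qed
  thus ?thesis using s0 by (intro exI[of _ "1 - s"]) auto
qed

end



lemma mat_unit: fixes T :: "real mat" assumes T: "T \<in> carrier_mat n n" and j: "j < n"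
  shows "T *\<^sub>v unit_vec n j = col T j"
  by (rule eq_vecI) (use T j in \<open>auto simp: scalar_prod_right_unit\<close>)

lemma sq_unit: "j < n \<Longrightarrow> sq (unit_vec n j) = 1"
  unfolding sq_def by (simp add: scalar_prod_left_unit)

lemma sq_col: fixes T :: "real mat" assumes T: "T \<in> carrier_mat n n" and j: "j < n"
  shows "sq (col T j) = (\<Sum>i<n. (T $$ (i,j))^2)"
  using T j by (subst sq_sum[of _ n]) auto

lemma sum_single: fixes f :: "nat \<Rightarrow> real"
  assumes m: "m < n" and z: "\<And>k. k < n \<Longrightarrow> k \<noteq> m \<Longrightarrow> f k = 0"
  shows "(\<Sum>k<n. f k) = f m"
proof -
  have "(\<Sum>k<n. f k) = f m + (\<Sum>k\<in>{..<n} - {m}. f k)"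
    using m by (subst sum.remove[of _ m]) auto
  also have "(\<Sum>k\<in>{..<n} - {m}. f k) = 0" by (intro sum.neutral) (use z in auto)
  finally show ?thesis by simp
qed

lemma multmat_entry: fixes X Y :: "real mat"
  assumes X: "X \<in> carrier_mat n n" and Y: "Y \<in> carrier_mat n n" and i: "i < n" and j: "j < n"
  shows "(X * Y) $$ (i,j) = (\<Sum>k<n. X $$ (i,k) * Y $$ (k,j))"
  using X Y i j by (auto simp: scalar_prod_def lessThan_atLeast0)

lemma hp_of:
  assumes "1 \<le> d" "d \<le> n" "hoon_pair n d A C" "hoon_strict n A C"
  shows "hp n d A C"
  using assms unfolding hoon_pair_def hoon_strict_def hoon_unreduced_def hp_def
  by auto

theorem corollary4p3:
  fixes n d :: nat and A C A' C' :: "real mat"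
  assumes "1 \<le> d" and "d \<le> n"
    and "hoon_pair n d A C" and "hoon_strict n A C" and "hoon_nondegenerate A C"
    and "hoon_pair n d A' C'" and "hoon_strict n A' C'"
    and "hoon_equivalent n A C A' C'"
  shows "A' = A \<and> C' = C"
proof -
  obtain T Ti where T: "T \<in> carrier_mat n n" and Ti: "Ti \<in> carrier_mat n n"
    and TTi: "T * Ti = 1\<^sub>m n" and TiT: "Ti * T = 1\<^sub>m n"
    and A'e: "A' = Ti * A * T" and C'e: "C' = C * T"
    using assms(8) unfolding hoon_equivalent_def by auto
  interpret P: hp n d A C by (rule hp_of) (use assms in auto)
  interpret Q: hp n d A' C' by (rule hp_of) (use assms in auto)
  have A: "A \<in> carrier_mat n n" by (rule P.B)
  have C: "C \<in> carrier_mat d n" by (rule P.D)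
  have A': "A' \<in> carrier_mat n n" by (rule Q.B)
  have C': "C' \<in> carrier_mat d n" by (rule Q.D)
  have n0: "0 < n" by (rule P.n_pos)
  have TA': "T * A' = A * T"
  proof -
    have "T * A' = (T * (Ti * A)) * T" unfolding A'e
      using assoc_mult_mat[of T n n "Ti * A" n T n] T Ti A by auto
    also have "T * (Ti * A) = (T * Ti) * A" using assoc_mult_mat[of T n n Ti n A n] T Ti A by auto
    also have "\<dots> = A" using TTi A by simp
    finally show ?thesis .
  qed
  define f where "f x = sq (T *\<^sub>v x) - sq x" for x
  have finv: "f (A' *\<^sub>v x) = f x" if x: "x \<in> carrier_vec n" for x
  proof -
    have "T *\<^sub>v (A' *\<^sub>v x) = (T * A') *\<^sub>v x" using T A' x by simp
    also have "\<dots> = A *\<^sub>v (T *\<^sub>v x)" unfolding TA' using A T x by simp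
    finally have e1: "T *\<^sub>v (A' *\<^sub>v x) = A *\<^sub>v (T *\<^sub>v x)" .
    have e2: "C *\<^sub>v (T *\<^sub>v x) = C' *\<^sub>v x" unfolding C'e using C T x by simp
    have "sq (T *\<^sub>v (A' *\<^sub>v x)) = sq (T *\<^sub>v x) - sq (C' *\<^sub>v x)"
      unfolding e1 P.iso[of "T *\<^sub>v x"] e2[symmetric] using T x P.iso by auto
    moreover have "sq (A' *\<^sub>v x) = sq x - sq (C' *\<^sub>v x)" by (rule Q.iso[OF x])
    ultimately show ?thesis unfolding f_def by simp
  qed
  have fit: "f (Q.it k x) = f x" if x: "x \<in> carrier_vec n" for k x
  proof (induct k)
    case (Suc k) thus ?case using finv[OF Q.it_carrier[OF x, of k]] by (simp add: Q.it_Suc)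
  qed simp
  have fR: "f (Q.R *\<^sub>v x) = f x" if x: "x \<in> carrier_vec n" for x
    unfolding Q.R_def using Q.pow_it[OF x] fit[OF x] by simp
  obtain q where q: "0 \<le> q" "q < 1" and qR: "\<And>v. v \<in> carrier_vec n \<Longrightarrow> sq (Q.R *\<^sub>v v) \<le> q * sq v"
    using Q.contraction by auto
  have fbound: "\<bar>f y\<bar> \<le> (frob n n T + 1) * sq y" if y: "y \<in> carrier_vec n" for y
    using frob_bound[OF T y] sq_nonneg[of "T *\<^sub>v y"] sq_nonneg[of y] frob_nonneg[of n n T]
    unfolding f_def by (auto simp: algebra_simps)
  have Tnorm: "sq (T *\<^sub>v v) = sq v" if v: "v \<in> carrier_vec n" for v
  proof -
    define y where "y k = ((\<lambda>x. Q.R *\<^sub>v x) ^^ k) v" for k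
    have yc: "y k \<in> carrier_vec n" for k unfolding y_def by (induct k) (use Q.R v in auto)
    have ys: "sq (y k) \<le> q^k * sq v" for k
    proof (induct k)
      case 0 thus ?case by (simp add: y_def)
    next
      case (Suc k)
      have "sq (y (Suc k)) = sq (Q.R *\<^sub>v y k)" by (simp add: y_def)
      also have "\<dots> \<le> q * sq (y k)" by (rule qR[OF yc])
      also have "\<dots> \<le> q * (q^k * sq v)" using Suc q by (intro mult_left_mono) auto
      finally show ?case by simp
    qed
    have yf: "f (y k) = f v" for k
    proof (induct k)
      case (Suc k) thus ?case using fR[OF yc[of k]] by (simp add: y_def)
    qed (simp add: y_def)
    have "f v = 0"
    proof (rule pow_zero_arg[of "(frob n n T + 1) * sq v" q])
      show "0 \<le> (frob n n T + 1) * sq v" using frob_nonneg[of n n T] sq_nonneg[of v] by simp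
      fix k
      have "\<bar>f v\<bar> = \<bar>f (y k)\<bar>" using yf by simp
      also have "\<dots> \<le> (frob n n T + 1) * sq (y k)" by (rule fbound[OF yc])
      also have "\<dots> \<le> (frob n n T + 1) * (q^k * sq v)"
        using ys[of k] frob_nonneg[of n n T] by (intro mult_left_mono) auto
      finally show "\<bar>f v\<bar> \<le> (frob n n T + 1) * sq v * q ^ k" by (simp add: algebra_simps)
    qed (use q in auto)
    thus ?thesis unfolding f_def by simp
  qed
  have Tinorm: "sq (Ti *\<^sub>v v) = sq v" if v: "v \<in> carrier_vec n" for v
  proof -
    have "sq (Ti *\<^sub>v v) = sq (T *\<^sub>v (Ti *\<^sub>v v))" using Tnorm[of "Ti *\<^sub>v v"] Ti v by simp
    also have "T *\<^sub>v (Ti *\<^sub>v v) = v" using T Ti v TTi by (simp flip: assoc_mult_mat_vec)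
    finally show ?thesis .
  qed
  have c00: "0 < C $$ (0,0)" using assms(4) P.D00
    unfolding hoon_strict_def hoon_standard_def by auto
  have c'00: "0 < C' $$ (0,0)" using assms(7) Q.D00
    unfolding hoon_strict_def hoon_standard_def by auto
  have CTe: "C' $$ (0,j) = C $$ (0,0) * T $$ (0,j)" if j: "j < n" for j
  proof -
    have "C' $$ (0,j) = (C *\<^sub>v col T j) $ 0" unfolding C'e using C T j P.d1 by auto
    also have "\<dots> = C $$ (0,0) * (col T j) $ 0" by (rule P.Drow0) (use T j n0 in auto)
    finally show ?thesis using T j n0 by simp
  qed
  have CC'Ti: "C' * Ti = C"
  proof -
    have "C' * Ti = C * (T * Ti)" unfolding C'e using assoc_mult_mat[of C d n T n Ti n] C T Ti by auto
    thus ?thesis using TTi C by simp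
  qed
  have CTie: "C $$ (0,j) = C' $$ (0,0) * Ti $$ (0,j)" if j: "j < n" for j
  proof -
    have "C $$ (0,j) = (C' *\<^sub>v col Ti j) $ 0" unfolding CC'Ti[symmetric] using C' Ti j P.d1 by auto
    also have "\<dots> = C' $$ (0,0) * (col Ti j) $ 0" by (rule Q.Drow0) (use Ti j n0 in auto)
    finally show ?thesis using Ti j n0 by simp
  qed
  have ts: "T $$ (0,0) * Ti $$ (0,0) = 1"
    using CTe[OF n0] CTie[OF n0] c00 c'00 by (simp add: algebra_simps)
  have tpos: "T $$ (0,0) > 0" using CTe[OF n0] c00 c'00 by (simp add: zero_less_mult_iff)
  have spos: "Ti $$ (0,0) > 0" using CTie[OF n0] c00 c'00 by (simp add: zero_less_mult_iff)
  have colsq: "(\<Sum>i<n. (X $$ (i,j))^2) = 1" if X: "X \<in> carrier_mat n n" and Xn: "\<And>v. v \<in> carrier_vec n \<Longrightarrow> sq (X *\<^sub>v v) = sq v"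
    and j: "j < n" for X j
  proof -
    have "(\<Sum>i<n. (X $$ (i,j))^2) = sq (col X j)" using sq_col[OF X j] by simp
    also have "\<dots> = sq (X *\<^sub>v unit_vec n j)" using mat_unit[OF X j] by simp
    also have "\<dots> = 1" using Xn[of "unit_vec n j"] sq_unit[OF j] by simp
    finally show ?thesis .
  qed
  have le1: "(X $$ (0,0))^2 \<le> 1" if X: "X \<in> carrier_mat n n" and Xn: "\<And>v. v \<in> carrier_vec n \<Longrightarrow> sq (X *\<^sub>v v) = sq v" for X
  proof -
    have "(X $$ (0,0))^2 \<le> (\<Sum>i<n. (X $$ (i,0))^2)"
      by (rule member_le_sum[of 0 "{..<n}" "\<lambda>i. (X $$ (i,0))^2"]) (use n0 in auto)
    thus ?thesis using colsq[OF X Xn n0] by simp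
  qed
  have t1: "T $$ (0,0) = 1"
  proof -
    have a: "T $$ (0,0) \<le> 1" using le1[OF T Tnorm] tpos
      by (metis abs_of_pos abs_square_le_1)
    have b: "Ti $$ (0,0) \<le> 1" using le1[OF Ti Tinorm] spos
      by (metis abs_of_pos abs_square_le_1)
    have "T $$ (0,0) * Ti $$ (0,0) \<le> T $$ (0,0)" using b tpos by (simp add: mult_left_le)
    thus ?thesis using a ts by linarith
  qed
  have colT: "\<forall>i<n. T $$ (i,j) = (if i = j then 1 else 0)" if j: "j < n" for j
    using j
  proof (induct j rule: less_induct)
    case (less j)
    have IH: "\<And>j' i. j' < j \<Longrightarrow> i < n \<Longrightarrow> T $$ (i,j') = (if i = j' then 1 else 0)"
      using less by auto
    have Tu: "T *\<^sub>v unit_vec n j' = unit_vec n j'" if j': "j' < j" for j'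
    proof -
      have "col T j' = unit_vec n j'" by (rule eq_vecI) (use T IH[OF j'] j' less(2) in auto)
      thus ?thesis using mat_unit[OF T, of j'] j' less(2) by simp
    qed
    have jn: "j < n" by (rule less(2))
    have sum1: "(\<Sum>i<n. (T $$ (i,j))^2) = 1" by (rule colsq[OF T Tnorm jn])
    have diagpos: "T $$ (j,j) > 0" and offlow: "\<And>i. i < n \<Longrightarrow> i > j \<Longrightarrow> T $$ (i,j) = 0"
    proof -
      have "T $$ (j,j) > 0 \<and> (\<forall>i. i < n \<longrightarrow> i > j \<longrightarrow> T $$ (i,j) = 0)"
      proof (cases j)
        case 0
        have "(\<Sum>i<n. (T $$ (i,0))^2) = (T $$ (0,0))^2 + (\<Sum>i\<in>{..<n}-{0}. (T $$ (i,0))^2)"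
          using n0 by (subst sum.remove[of _ 0]) auto
        hence "(\<Sum>i\<in>{..<n}-{0}. (T $$ (i,0))^2) = 0" using sum1 t1 0 by simp
        hence "\<forall>i\<in>{..<n}-{0}. (T $$ (i,0))^2 = 0" by (subst (asm) sum_nonneg_eq_0_iff) auto
        thus ?thesis using 0 t1 by auto
      next
        case (Suc j0)
        have ent: "T $$ (i,j) * A' $$ (j,j0) = A $$ (i,j0)" if i: "i < n" "i \<ge> j" for i
        proof -
          have "(T * A') $$ (i,j0) = (\<Sum>k<n. T $$ (i,k) * A' $$ (k,j0))"
            by (rule multmat_entry) (use T A' i jn Suc in auto)
          also have "\<dots> = T $$ (i,j) * A' $$ (j,j0)"
          proof (rule sum_single[OF jn])
            fix k assume k: "k < n" "k \<noteq> j"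
            show "T $$ (i,k) * A' $$ (k,j0) = 0"
            proof (cases "k < j")
              case True thus ?thesis using IH[OF True i(1)] i by auto
            next
              case False thus ?thesis using Q.hess[of k j0] k Suc by auto
            qed
          qed
          finally have e1: "(T * A') $$ (i,j0) = T $$ (i,j) * A' $$ (j,j0)" .
          have "(A * T) $$ (i,j0) = (\<Sum>k<n. A $$ (i,k) * T $$ (k,j0))"
            by (rule multmat_entry) (use T A i jn Suc in auto)
          also have "\<dots> = A $$ (i,j0) * T $$ (j0,j0)"
            by (rule sum_single) (use IH Suc jn in auto)
          also have "\<dots> = A $$ (i,j0)" using IH[of j0 j0] Suc jn by auto
          finally show ?thesis using e1 TA' by simp
        qed
        have s1: "A' $$ (j0+1,j0) > 0" using assms(7) Q.sub[of j0] Suc jn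
          unfolding hoon_strict_def hoon_standard_def by fastforce
        have s2: "A $$ (j0+1,j0) > 0" using assms(4) P.sub[of j0] Suc jn
          unfolding hoon_strict_def hoon_standard_def by fastforce
        have "T $$ (j,j) > 0" using ent[of j] jn s1 s2 Suc
          by (metis Suc_eq_plus1 order.refl zero_less_mult_pos2)
        moreover have "T $$ (i,j) = 0" if "i < n" "i > j" for i
          using ent[of i] that P.hess[of i j0] s1 Suc by auto
        ultimately show ?thesis by auto
      qed
      thus "T $$ (j,j) > 0" "\<And>i. i < n \<Longrightarrow> i > j \<Longrightarrow> T $$ (i,j) = 0" by auto
    qed
    have offhigh: "T $$ (i,j) = 0" if i: "i < j" for i
    proof -
      have ic: "i < n" using i jn by auto
      have ui: "unit_vec n i \<in> carrier_vec n" "unit_vec n j \<in> carrier_vec n" by auto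
      have x: "1 \<cdot>\<^sub>v unit_vec n i - unit_vec n j \<in> carrier_vec n" by auto
      have Tx: "T *\<^sub>v (1 \<cdot>\<^sub>v unit_vec n i - unit_vec n j) = 1 \<cdot>\<^sub>v unit_vec n i - T *\<^sub>v unit_vec n j"
        using T Tu[OF i] by (simp add: mult_minus_distrib_mat_vec mult_mat_vec)
      have "sq (T *\<^sub>v (1 \<cdot>\<^sub>v unit_vec n i - unit_vec n j)) = 1 - 2 * (unit_vec n i \<bullet> (T *\<^sub>v unit_vec n j)) + 1"
        unfolding Tx using sq_lin[of "unit_vec n i" n "T *\<^sub>v unit_vec n j" 1] T Tnorm[of "unit_vec n j"]
          sq_unit[OF ic] sq_unit[OF jn] by auto
      moreover have "sq (1 \<cdot>\<^sub>v unit_vec n i - unit_vec n j) = 1 - 2 * (unit_vec n i \<bullet> unit_vec n j) + 1"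
        using sq_lin[of "unit_vec n i" n "unit_vec n j" 1] sq_unit[OF ic] sq_unit[OF jn] by auto
      moreover have "unit_vec n i \<bullet> (unit_vec n j :: real vec) = 0"
        using scalar_prod_left_unit[of "unit_vec n j :: real vec" n i] ic jn i by simp
      moreover have "unit_vec n i \<bullet> (T *\<^sub>v unit_vec n j) = T $$ (i,j)"
        using ic jn T by (simp add: scalar_prod_left_unit)
      ultimately show ?thesis using Tnorm[OF x] by simp
    qed
    have "(\<Sum>i<n. (T $$ (i,j))^2) = (T $$ (j,j))^2"
      by (rule sum_single[OF jn]) (use offhigh offlow in \<open>auto simp: nat_neq_iff\<close>)
    hence "(T $$ (j,j))^2 = 1" using sum1 by simp
    hence "T $$ (j,j) = 1 \<or> T $$ (j,j) = -1" by (simp add: power2_eq_1_iff)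
    hence "T $$ (j,j) = 1" using diagpos by auto
    thus ?case using offhigh offlow by (auto simp: nat_neq_iff)
  qed
  have T1: "T = 1\<^sub>m n" by (rule eq_matI) (use T colT in auto)
  have Ti1: "Ti = 1\<^sub>m n" using TiT Ti unfolding T1 by simp
  show ?thesis unfolding A'e C'e T1 Ti1 using A C by simp
qed

end
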